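(* Let $b>1$, $p\ge1$, $R\subseteq\{0,\ldots,p-1\}$, let $k$ be the greatest divisor of $p$ coprime with $b$ and $d=p/k$. A state of $\mathcal{A}_{R,p}$ is a multiple of $d$ if and only if it belongs to a $0$-circuit.
   Context: $A_b=\{0,\ldots,b-1\}$. $\mathcal{A}_{R,p}$: complete deterministic automaton over $A_b$ with states $\{0,\ldots,p-1\}$, initial $0$, final $R$, transitions $n\xrightarrow{a}(nb+a)\bmod p$. A $0$-circuit is a circuit all of whose transitions are labelled by the digit $0$. *)

theory Defs
  imports Main "HOL-Computational_Algebra.Primes"
begin

definition aut_states :: "nat \<Rightarrow> nat set" where
  "aut_states p = {0..<p}"

definition aut_alphabet :: "nat \<Rightarrow> nat set" where
  "aut_alphabet b = {0..<b}"

definition aut_delta :: "nat \<Rightarrow> nat \<Rightarrow> nat \<Rightarrow> nat \<Rightarrow> nat" where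
  "aut_delta b p n a = (n * b + a) mod p"

definition zero_circuit :: "nat \<Rightarrow> nat \<Rightarrow> nat list \<Rightarrow> bool" where
  "zero_circuit b p qs \<longleftrightarrow>
     length qs \<ge> 2 \<and> set qs \<subseteq> aut_states p \<and> hd qs = last qs \<and>
     (\<forall>i. Suc i < length qs \<longrightarrow> aut_delta b p (qs ! i) 0 = qs ! Suc i)"

definition on_zero_circuit :: "nat \<Rightarrow> nat \<Rightarrow> nat \<Rightarrow> bool" where
  "on_zero_circuit b p n \<longleftrightarrow> (\<exists>qs. zero_circuit b p qs \<and> n \<in> set qs)"

definition max_coprime_divisor :: "nat \<Rightarrow> nat \<Rightarrow> nat" where
  "max_coprime_divisor b p = (GREATEST k. k dvd p \<and> coprime k b)"

end

theory Submission
  imports Defs "HOL-Number_Theory.Number_Theory"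
begin

lemma decomp:
  fixes b p :: nat
  assumes "b > 1" "p > 0"
  shows "\<exists>d k. p = d * k \<and> coprime k b \<and> d dvd b ^ p"
  using assms(2)
proof (induction p rule: less_induct)
  case (less p)
  show ?case
  proof (cases "coprime p b")
    case True
    then show ?thesis by (intro exI[of _ 1] exI[of _ p]) auto
  next
    case False
    then have "gcd p b \<noteq> 1" using coprime_iff_gcd_eq_1 by blast
    then obtain q where q0: "prime q" "q dvd gcd p b" using prime_factor_nat by blast
    then have q: "prime q" "q dvd p" "q dvd b" by (meson dvd_trans gcd_dvd1 gcd_dvd2)+
    then obtain p' where p': "p = q * p'" by (elim dvdE)
    have q1: "q > 1" using q prime_gt_1_nat by blast
    have pp: "p' > 0" using p' less.prems by (cases p') auto
    have "p' < p" using p' q1 pp by simp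
    then obtain d k where dk: "p' = d * k" "coprime k b" "d dvd b ^ p'"
      using less.IH pp by blast
    have "q * d dvd b * b ^ p'" using dk(3) q(3) by (simp add: mult_dvd_mono)
    moreover have "b * b ^ p' dvd b ^ p"
    proof -
      have "Suc p' \<le> p" using \<open>p' < p\<close> by simp
      then show ?thesis by (metis le_imp_power_dvd power_Suc)
    qed
    ultimately have "q * d dvd b ^ p" by (rule dvd_trans)
    then show ?thesis using p' dk by (intro exI[of _ "q*d"] exI[of _ k]) auto
  qed
qed

lemma mcd_props:
  fixes b p :: nat
  assumes "b > 1" "p > 0"
  shows "max_coprime_divisor b p dvd p \<and> coprime (max_coprime_divisor b p) b
         \<and> (p div max_coprime_divisor b p) dvd b ^ p"
proof -
  obtain d k where dk: "p = d * k" "coprime k b" "d dvd b ^ p"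
    using decomp[OF assms] by blast
  let ?P = "\<lambda>k. k dvd p \<and> coprime k b"
  have bnd: "\<forall>y. ?P y \<longrightarrow> y \<le> p" using assms(2) by (auto intro: dvd_imp_le)
  have Pk: "?P k" using dk by auto
  define K where "K = max_coprime_divisor b p"
  have PK: "?P K" unfolding K_def max_coprime_divisor_def
    by (rule GreatestI_nat[where P="?P", OF Pk]) (use bnd in auto)
  have "k \<le> K" unfolding K_def max_coprime_divisor_def
    by (rule Greatest_le_nat[where P="?P", OF Pk]) (use bnd in auto)
  have "coprime K (b ^ p)" using PK by auto
  then have "coprime K d" by (rule coprime_divisors[OF dvd_refl dk(3)])
  then have "K dvd k" using PK dk(1) by (metis coprime_dvd_mult_right_iff)
  have kpos: "k > 0" using dk(1) assms(2) by (cases k) auto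
  have "K = k" using \<open>K dvd k\<close> \<open>k \<le> K\<close> kpos dvd_imp_le by (simp add: dvd_antisym le_antisym)
  then have "p div K = d" using dk(1) kpos by simp
  then show ?thesis using PK dk K_def by simp
qed

lemma circuit_iff:
  fixes b p n :: nat
  assumes "p > 0" "n < p"
  shows "on_zero_circuit b p n \<longleftrightarrow> (\<exists>m\<ge>1. n * b ^ m mod p = n)"
proof
  assume "on_zero_circuit b p n"
  then obtain qs where qs: "zero_circuit b p qs" "n \<in> set qs" unfolding on_zero_circuit_def by blast
  let ?L = "length qs - 1"
  have len: "length qs \<ge> 2" and st: "set qs \<subseteq> {0..<p}" and hl: "hd qs = last qs"
    and step: "\<And>i. Suc i < length qs \<Longrightarrow> (qs ! i * b) mod p = qs ! Suc i"
    using qs(1) unfolding zero_circuit_def aut_states_def aut_delta_def by auto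
  have q0: "qs ! 0 < p" using st len by (metis atLeastLessThan_iff nth_mem subsetD less_le_trans zero_less_numeral)
  have gen: "i < length qs \<Longrightarrow> qs ! i = qs ! 0 * b ^ i mod p" for i
  proof (induction i)
    case 0 then show ?case using q0 by simp
  next
    case (Suc i)
    have ih: "qs ! i = qs ! 0 * b ^ i mod p" using Suc by simp
    have "qs ! Suc i = (qs ! i * b) mod p" using step Suc.prems by simp
    also have "\<dots> = (qs ! 0 * b ^ i mod p * b) mod p" using ih by simp
    also have "\<dots> = (qs ! 0 * b ^ i * b) mod p" by (rule mod_mult_left_eq)
    also have "\<dots> = qs ! 0 * b ^ Suc i mod p" by (simp add: mult_ac)
    finally show ?case .
  qed
  have lastq: "qs ! ?L = qs ! 0" using hl len
    by (metis hd_conv_nth last_conv_nth list.size(3) not_numeral_le_zero)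
  then have c: "qs ! 0 * b ^ ?L mod p = qs ! 0" using gen[of ?L] len by simp
  obtain j where j: "j < length qs" "n = qs ! j" using qs(2) by (metis in_set_conv_nth)
  have nj: "n = qs ! 0 * b ^ j mod p" using gen j by simp
  have "n * b ^ ?L mod p = (qs ! 0 * b ^ j mod p) * b ^ ?L mod p"
    using nj by simp
  also have "\<dots> = qs ! 0 * b ^ j * b ^ ?L mod p" by (rule mod_mult_left_eq)
  also have "\<dots> = qs ! 0 * b ^ ?L * b ^ j mod p" by (simp add: mult_ac)
  also have "\<dots> = (qs ! 0 * b ^ ?L mod p) * b ^ j mod p" by (simp add: mod_mult_left_eq)
  also have "\<dots> = n" using c nj by simp
  finally show "\<exists>m\<ge>1. n * b ^ m mod p = n" using len by (intro exI[of _ ?L]) auto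
next
  assume "\<exists>m\<ge>1. n * b ^ m mod p = n"
  then obtain m where m: "m \<ge> 1" "n * b ^ m mod p = n" by blast
  define qs where "qs = map (\<lambda>i. n * b ^ i mod p) [0..<m+1]"
  have "zero_circuit b p qs"
    unfolding zero_circuit_def aut_states_def aut_delta_def
  proof (intro conjI allI impI)
    show "2 \<le> length qs" using m unfolding qs_def by simp
    show "set qs \<subseteq> {0..<p}" using assms unfolding qs_def by auto
    show "hd qs = last qs" using m assms unfolding qs_def by (simp add: hd_map last_map)
    fix i assume "Suc i < length qs"
    then show "(qs ! i * b + 0) mod p = qs ! Suc i" unfolding qs_def
      by (simp add: nth_append mod_mult_right_eq mult.commute mult.left_commute del: upt_Suc)
  qed
  moreover have "n \<in> set qs" unfolding qs_def
    unfolding set_map by (rule rev_image_eqI[of 0]) (use assms m in simp_all)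
  ultimately show "on_zero_circuit b p n" unfolding on_zero_circuit_def by blast
qed

theorem lemma22:
  fixes b p :: nat and R :: "nat set"
  assumes "b > 1" and "p \<ge> 1" and "R \<subseteq> aut_states p"
  shows "\<forall>n \<in> aut_states p.
           (p div max_coprime_divisor b p) dvd n \<longleftrightarrow> on_zero_circuit b p n"
proof
  fix n assume "n \<in> aut_states p"
  then have np: "n < p" unfolding aut_states_def by simp
  have pp: "p > 0" using assms by simp
  define k where "k = max_coprime_divisor b p"
  define d where "d = p div k"
  have props: "k dvd p" "coprime k b" "d dvd b ^ p"
    using mcd_props[OF assms(1) pp] unfolding k_def d_def by auto
  have pdk: "p = d * k" using props(1) unfolding d_def by simp
  have kpos: "k > 0" using props(1) pp by (cases k) auto
  have "d dvd n \<longleftrightarrow> (\<exists>m\<ge>1. n * b ^ m mod p = n)"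
  proof
    assume "d dvd n"
    then obtain j where j: "n = d * j" by blast
    let ?m = "totient k"
    have m1: "?m \<ge> 1" using kpos by (simp add: Suc_leI)
    have "[b ^ ?m = 1] (mod k)" by (rule euler_theorem) (metis props(2) coprime_commute)
    then have "[j * b ^ ?m = j * 1] (mod k)" by (rule cong_scalar_left)
    then have e: "j * b ^ ?m mod k = j mod k" unfolding cong_def by simp
    have "n * b ^ ?m mod p = d * (j * b ^ ?m mod k)" using j pdk by (simp add: mult.assoc)
    also have "\<dots> = d * (j mod k)" using e by simp
    also have "\<dots> = n mod p" using j pdk by simp
    also have "\<dots> = n" using np by simp
    finally show "\<exists>m\<ge>1. n * b ^ m mod p = n" using m1 by blast
  next
    assume "\<exists>m\<ge>1. n * b ^ m mod p = n"
    then obtain m where m: "m \<ge> 1" "n * b ^ m mod p = n" by blast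
    have it: "n * b ^ (m * t) mod p = n" for t
    proof (induction t)
      case 0 then show ?case using np by simp
    next
      case (Suc t)
      have "n * b ^ (m * Suc t) mod p = (n * b ^ (m*t)) * b ^ m mod p"
        by (simp add: mult_Suc_right power_add mult_ac)
      also have "\<dots> = (n * b ^ (m*t) mod p) * b ^ m mod p" by (simp add: mod_mult_left_eq)
      also have "\<dots> = n" using Suc m by simp
      finally show ?case .
    qed
    have "b ^ p dvd b ^ (m * p)" using m(1) by (simp add: le_imp_power_dvd)
    then have "d dvd n * b ^ (m * p)" using props(3) by (meson dvd_mult dvd_trans)
    moreover have "d dvd p" using pdk by simp
    ultimately have "d dvd n * b ^ (m * p) mod p" by (simp add: dvd_mod)
    then show "d dvd n" using it[of p] by simp
  qed
  then show "(p div max_coprime_divisor b p) dvd n \<longleftrightarrow> on_zero_circuit b p n"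
    using circuit_iff[OF pp np] unfolding d_def k_def by simp
qed

end
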